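(* Let $N\ge1$, $n\ge1$ and $n_0=n_1=\cdots=n_N=n$. Then for every integer $0\le k\le n$, $$d(k)=\frac{(n-k)(n+1-k)}{2}+\frac{a(k)}{2}\big((a(k)-1)N+2b(k)\big),$$ where $a(k)=\lfloor (n-k)/N\rfloor$ and $b(k)=(n-k)\bmod N$. In particular, $d(k)=\frac{(n-k)(n+1-k)}{2}$ whenever $N\ge n$.
   Context: For a vector $\mathbf n=(n_0,\dots,n_N)$ of positive integers, with nondecreasing rearrangement $\tilde n_0\le\cdots\le\tilde n_N$, $c_i=1-i+\min_{k'=1,\dots,N}\lfloor(\sum_{l=0}^{k'}\tilde n_l-i)/k'\rfloor$ for $i=1,\dots,\tilde n_0$, and $d(k)=\sum_{i=k+1}^{\tilde n_0}c_i$; this is the diversity-multiplexing tradeoff at integer multiplexing gain $k$ of the $(n_0,\dots,n_N)$ Rayleigh product channel (channel matrix a product of $N$ independent i.i.d. $\mathcal{CN}(0,1)$ matrices of sizes $n_{i-1}\times n_i$). *)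

theory Defs
  imports Complex_Main
begin

text \<open>A channel-size vector (n_0,...,n_N) is a list of length N+1 of positive naturals;
  N = length ns - 1. The nondecreasing rearrangement is sort ns, so tilde-n_l = sort ns ! l.\<close>

definition dmt_N :: "nat list \<Rightarrow> nat" where
  "dmt_N ns = length ns - 1"

definition dmt_c :: "nat list \<Rightarrow> nat \<Rightarrow> int" where
  "dmt_c ns i = 1 - int i +
     Min ((\<lambda>k'. (int (\<Sum>l\<le>k'. sort ns ! l) - int i) div int k') ` {1..dmt_N ns})"

definition dmt_d :: "nat list \<Rightarrow> nat \<Rightarrow> int" where
  "dmt_d ns k = (\<Sum>i\<in>{k+1..sort ns ! 0}. dmt_c ns i)"

end

theory Submission
  imports Defs
begin

lemma sort_rep: "sort (replicate m (n::nat)) = replicate m n"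
  by (simp add: sorted_sort_id)

lemma c_val:
  assumes "N \<ge> 1" "1 \<le> i" "i \<le> n"
  shows "dmt_c (replicate (N+1) n) i = int (n + 1 - i) + int ((n - i) div N)"
proof -
  have e: "(int (\<Sum>l\<le>k'. sort (replicate (N+1) n) ! l) - int i) div int k'
        = int n + int ((n - i) div k')" if "k' \<in> {1..N}" for k'
  proof -
    have "(\<Sum>l\<le>k'. sort (replicate (N+1) n) ! l) = (\<Sum>l\<le>k'. n)"
      unfolding sort_rep using that by (intro sum.cong) (auto simp del: replicate.simps)
    also have "\<dots> = (k'+1)*n" by simp
    finally have "(\<Sum>l\<le>k'. sort (replicate (N+1) n) ! l) = (k'+1)*n" .
    hence "int (\<Sum>l\<le>k'. sort (replicate (N+1) n) ! l) - int i = int n * int k' + int (n - i)"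
      using assms by (simp add: algebra_simps of_nat_diff)
    moreover have "(int n * int k' + int (n - i)) div int k' = int n + int (n-i) div int k'"
      using that by simp
    ultimately show ?thesis by (simp add: zdiv_int)
  qed
  have "Min ((\<lambda>k'. (int (\<Sum>l\<le>k'. sort (replicate (N+1) n) ! l) - int i) div int k') ` {1..dmt_N (replicate (N+1) n)})
      = int n + int ((n - i) div N)"
  proof (rule Min_eqI)
    show "finite ((\<lambda>k'. (int (\<Sum>l\<le>k'. sort (replicate (N+1) n) ! l) - int i) div int k') ` {1..dmt_N (replicate (N+1) n)})" by simp
  next
    fix y assume "y \<in> (\<lambda>k'. (int (\<Sum>l\<le>k'. sort (replicate (N+1) n) ! l) - int i) div int k') ` {1..dmt_N (replicate (N+1) n)}"
    then obtain k' where k: "k' \<in> {1..N}" and y: "y = (int (\<Sum>l\<le>k'. sort (replicate (N+1) n) ! l) - int i) div int k'"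
      by (auto simp: dmt_N_def)
    have "(n - i) div N \<le> (n - i) div k'" using k by (simp add: div_le_mono2)
    thus "int n + int ((n - i) div N) \<le> y" using e[OF k] y by simp
  next
    show "int n + int ((n - i) div N) \<in> (\<lambda>k'. (int (\<Sum>l\<le>k'. sort (replicate (N+1) n) ! l) - int i) div int k') ` {1..dmt_N (replicate (N+1) n)}"
      using e[of N] assms by (auto simp: dmt_N_def intro!: image_eqI[where x=N])
  qed
  thus ?thesis using assms by (simp add: dmt_c_def of_nat_diff)
qed

lemma sum_div:
  assumes "N \<ge> 1"
  shows "2 * (\<Sum>m<M. int (m div N)) = int (M div N) * ((int (M div N) - 1) * int N + 2 * int (M mod N))"
proof (induction M)
  case 0 then show ?case by simp
next
  case (Suc M)
  have "2 * (\<Sum>m<Suc M. int (m div N)) = 2 * (\<Sum>m<M. int (m div N)) + 2 * int (M div N)" by simp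
  also have "\<dots> = int (M div N) * ((int (M div N) - 1) * int N + 2 * int (M mod N)) + 2 * int (M div N)"
    using Suc by simp
  also have "\<dots> = int (Suc M div N) * ((int (Suc M div N) - 1) * int N + 2 * int (Suc M mod N))"
  proof (cases "Suc (M mod N) = N")
    case True
    then have m: "int (M mod N) = int N - 1" by linarith
    have "int (Suc M div N) = int (M div N) + 1" "int (Suc M mod N) = 0"
      using True by (simp_all add: div_Suc mod_Suc)
    then show ?thesis unfolding m by (simp add: algebra_simps)
  next
    case False
    then show ?thesis by (simp add: div_Suc mod_Suc algebra_simps)
  qed
  finally show ?case .
qed

theorem corollary4:
  fixes N n k :: nat
  assumes "N \<ge> 1" and "n \<ge> 1" and "k \<le> n"
  shows "real_of_int (dmt_d (replicate (N+1) n) k) =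
           real ((n - k) * (n + 1 - k)) / 2
           + real ((n - k) div N) / 2
             * ((real ((n - k) div N) - 1) * real N + 2 * real ((n - k) mod N))
       \<and> (N \<ge> n \<longrightarrow> real_of_int (dmt_d (replicate (N+1) n) k) = real ((n - k) * (n + 1 - k)) / 2)"
proof -
  define M where "M = n - k"
  have "dmt_d (replicate (N+1) n) k = (\<Sum>i\<in>{k+1..n}. int (n + 1 - i) + int ((n - i) div N))"
    unfolding dmt_d_def sort_rep using assms
    by (intro sum.cong) (auto simp del: replicate.simps simp: c_val[simplified])
  also have "\<dots> = (\<Sum>m<M. int (m + 1) + int (m div N))"
    by (rule sum.reindex_bij_witness[where i="\<lambda>m. n - m" and j="\<lambda>i. n - i"])
       (use assms in \<open>auto simp: M_def\<close>)
  also have "\<dots> = (\<Sum>m<M. int (m + 1)) + (\<Sum>m<M. int (m div N))"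
    by (simp add: sum.distrib)
  finally have D: "dmt_d (replicate (N+1) n) k = (\<Sum>m<M. int (m + 1)) + (\<Sum>m<M. int (m div N))" .
  have G: "2 * (\<Sum>m<M. int (m + 1)) = int M * (int M + 1)"
    by (induction M) (auto simp: algebra_simps)
  have H: "n + 1 - k = M + 1" using assms M_def by simp
  have main: "2 * dmt_d (replicate (N+1) n) k = int (M * (M+1)) + int (M div N) * ((int (M div N) - 1) * int N + 2 * int (M mod N))"
    using D G sum_div[OF assms(1), of M] by (simp add: algebra_simps)
  have R: "real_of_int (dmt_d (replicate (N+1) n) k) =
           real (M * (M+1)) / 2
           + real (M div N) / 2 * ((real (M div N) - 1) * real N + 2 * real (M mod N))"
  proof -
    have "real_of_int (2 * dmt_d (replicate (N+1) n) k) = real_of_int (int (M * (M+1)) + int (M div N) * ((int (M div N) - 1) * int N + 2 * int (M mod N)))"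
      using main by simp
    thus ?thesis by (simp add: field_simps)
  qed
  have Z: "N \<ge> n \<Longrightarrow> real (M div N) * ((real (M div N) - 1) * real N + 2 * real (M mod N)) = 0"
  proof -
    assume "N \<ge> n"
    hence "M \<le> N" using M_def by simp
    then consider "M < N" | "M = N" by linarith
    thus ?thesis
    proof cases
      case 1 then show ?thesis by simp
    next
      case 2 then show ?thesis using assms by simp
    qed
  qed
  show ?thesis using R Z H unfolding M_def[symmetric] by auto
qed

end
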